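(* Let $n\geq 1$, $m=\frac{n^2+n}{2}$, and let $z:\mathbb{R}^n\to\mathbb{R}^m$ be the map $z(x)=\begin{bmatrix}x_1^2 & x_1x_2 & \cdots & x_1x_n & x_2^2 & x_2x_3 & \cdots & x_n^2\end{bmatrix}^\top$ listing all quadratic monomials of $x$. Let $E=E^\top\in\mathbb{R}^{n\times n}$ be positive definite, $\alpha>0$, and $\mathcal{E}_\alpha=\{x : x^\top E x\leq\alpha^2\}$. Let $c_1,c_2,c_3\in\mathbb{R}^n$ be three nonzero, linearly independent vectors with $c_3$ orthogonal to both $c_1$ and $c_2$, and define $\phi(x)=x^\top Q x$ with $Q=\frac12(c_1c_2^\top+c_2c_1^\top)+c_3c_3^\top$. Then there exists $b\in\mathbb{R}^m$ such that $\phi(x)=b^\top z(x)$ for all $x$. Moreover, letting $W$ be either $(c_1^\top E^{-1}c_1)\,c_2c_2^\top$ or $(c_2^\top E^{-1}c_2)\,c_1c_1^\top$, and $\gamma=\lambda_{\max}\!\left(E^{-1/2}(2Q-c_3c_3^\top)E^{-1/2}\right)$, we have $$\begin{bmatrix} x\\ w\end{bmatrix}^\top\begin{bmatrix}\alpha^2 (W+\gamma c_3c_3^\top) & 0\\ 0 & -bb^\top\end{bmatrix}\begin{bmatrix} x\\ w\end{bmatrix}\geq 0\quad\text{for all } x\in\mathcal{E}_\alpha,\ w=z(x).$$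
   Context: $\lambda_{\max}(\cdot)$ denotes the largest eigenvalue of a real symmetric matrix, and $E^{-1/2}$ is the inverse of the symmetric positive definite square root of $E$. *)

theory Defs
  imports "HOL-Analysis.Analysis"
begin

definition outer :: "real^'n \<Rightarrow> real^'n \<Rightarrow> real^'n^'n" where
  "outer u v = (\<chi> i j. u$i * v$j)"

definition sym_mat :: "real^'n^'n \<Rightarrow> bool" where
  "sym_mat A \<longleftrightarrow> transpose A = A"

definition pos_def :: "real^'n^'n \<Rightarrow> bool" where
  "pos_def A \<longleftrightarrow> sym_mat A \<and> (\<forall>x. x \<noteq> 0 \<longrightarrow> x \<bullet> (A *v x) > 0)"

definition eigenvalue :: "real^'n^'n \<Rightarrow> real \<Rightarrow> bool" where
  "eigenvalue A l \<longleftrightarrow> (\<exists>v. v \<noteq> 0 \<and> A *v v = l *\<^sub>R v)"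

definition lambda_max :: "real^'n^'n \<Rightarrow> real" where
  "lambda_max A = Max {l. eigenvalue A l}"

definition psd_sqrt :: "real^'n^'n \<Rightarrow> real^'n^'n" where
  "psd_sqrt E = (THE S. pos_def S \<and> S ** S = E)"

definition inv_sqrt :: "real^'n^'n \<Rightarrow> real^'n^'n" where
  "inv_sqrt E = matrix_inv (psd_sqrt E)"

text \<open>Index set of the quadratic monomials x_i x_j with i \<le> j (m = n(n+1)/2 of them),
  ordered lexicographically; vectors in R^m are functions on this index set.\<close>
definition mono_idx :: "('n::{finite,linorder} \<times> 'n) set" where
  "mono_idx = {(i,j). i \<le> j}"

definition zmap :: "real^('n::{finite,linorder}) \<Rightarrow> ('n \<times> 'n \<Rightarrow> real)" where
  "zmap x = (\<lambda>(i,j). if i \<le> j then x$i * x$j else 0)"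

definition ellipsoid :: "real^'n^'n \<Rightarrow> real \<Rightarrow> (real^'n) set" where
  "ellipsoid E \<alpha> = {x. x \<bullet> (E *v x) \<le> \<alpha>^2}"

end

theory Submission
  imports Defs
begin

lemma sym_dot:
  fixes A :: "real^'n^'n"
  assumes "sym_mat A"
  shows "(A *v x) \<bullet> y = x \<bullet> (A *v y)"
proof -
  have "x v* A = A *v x"
    by (metis assms sym_mat_def transpose_matrix_vector)
  then show ?thesis by (metis dot_lmul_matrix)
qed

lemma vec_eq_inner:
  fixes a b :: "real^'n"
  assumes "\<And>y. a \<bullet> y = b \<bullet> y"
  shows "a = b"
proof -
  have "(a - b) \<bullet> (a - b) = 0" using assms[of "a-b"] by (simp add: inner_diff_left)
  then show ?thesis by simp
qed

lemma sym_matI: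
  fixes A :: "real^'n^'n"
  assumes "\<And>x y. (A *v x) \<bullet> y = x \<bullet> (A *v y)"
  shows "sym_mat A"
proof -
  have "transpose A *v x = A *v x" for x
    by (rule vec_eq_inner) (metis assms dot_lmul_matrix transpose_matrix_vector)
  then show ?thesis unfolding sym_mat_def by (simp add: matrix_eq)
qed

lemma psd_null:
  fixes B :: "real^'n \<Rightarrow> real^'n"
  assumes lin: "linear B" and sym: "\<And>x y. B x \<bullet> y = x \<bullet> B y" and V: "subspace V"
    and psd: "\<And>x. x \<in> V \<Longrightarrow> x \<bullet> (B x) \<ge> 0"
    and v: "v \<in> V" and z: "v \<bullet> (B v) = 0" and u: "u \<in> V"
  shows "u \<bullet> (B v) = 0"
proof (rule ccontr)
  define p where "p = u \<bullet> (B v)"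
  define r where "r = u \<bullet> (B u)"
  assume "u \<bullet> (B v) \<noteq> 0"
  hence p0: "p \<noteq> 0" by (simp add: p_def)
  define t where "t = - p / (\<bar>r\<bar> + 1)"
  have "v + t *\<^sub>R u \<in> V" using V v u by (simp add: subspace_add subspace_mul)
  hence ge: "(v + t *\<^sub>R u) \<bullet> (B (v + t *\<^sub>R u)) \<ge> 0" by (rule psd)
  have vu: "v \<bullet> (B u) = p" unfolding p_def
    by (metis sym inner_commute)
  have exp: "(v + t *\<^sub>R u) \<bullet> (B (v + t *\<^sub>R u)) = 2 * t * p + t*t*r"
    using z vu by (simp add: linear_add[OF lin] linear_scale[OF lin] inner_add_left inner_add_right
        p_def r_def algebra_simps)
  define k where "k = \<bar>r\<bar> + 1"
  have d: "k > 0" by (simp add: k_def)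
  have tk: "t * k = - p" unfolding t_def k_def by simp
  have "2 * t * p + t*t*r \<le> 2*t*p + t*t*\<bar>r\<bar>"
    by (simp add: mult_left_mono)
  moreover have "(2*t*p + t*t*\<bar>r\<bar>) * (k*k) = p*p*(\<bar>r\<bar> - 2*k)"
  proof -
    have "(2*t*p + t*t*\<bar>r\<bar>) * (k*k) = 2*(t*k)*p*k + (t*k)*(t*k)*\<bar>r\<bar>" by (simp add: algebra_simps)
    also have "\<dots> = p*p*(\<bar>r\<bar> - 2*k)" unfolding tk by (simp add: algebra_simps)
    finally show ?thesis .
  qed
  moreover have "p*p*(\<bar>r\<bar> - 2*k) < 0"
  proof -
    have "p*p > 0" using p0 not_real_square_gt_zero by blast
    moreover have "\<bar>r\<bar> - 2*k < 0" by (simp add: k_def)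
    ultimately show ?thesis by (simp add: mult_pos_neg)
  qed
  moreover have "k*k > 0" using d by simp
  ultimately have "2 * t * p + t*t*r < 0"
    by (smt (verit) mult_less_0_iff)
  then show False using ge exp by simp
qed

lemma spectral_sub:
  fixes M :: "real^'n^'n"
  assumes symM: "sym_mat M"
  shows "subspace V \<Longrightarrow> (\<forall>x\<in>V. M *v x \<in> V) \<Longrightarrow>
    \<exists>B. finite B \<and> B \<subseteq> V \<and> pairwise orthogonal B \<and>
        (\<forall>b\<in>B. norm b = 1 \<and> M *v b = (b \<bullet> (M *v b)) *\<^sub>R b) \<and> span B = V"
proof (induction "dim V" arbitrary: V rule: less_induct)
  case less
  note V = less.prems(1) and inv = less.prems(2)
  show ?case
  proof (cases "V \<subseteq> {0}")
    case True
    then have "V = {0}" using V subspace_0 by blast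
    then show ?thesis by (intro exI[of _ "{}"]) auto
  next
    case False
    then obtain y where y: "y \<in> V" "y \<noteq> 0" by blast
    define K where "K = V \<inter> sphere 0 1"
    define f where "f = (\<lambda>x::real^'n. x \<bullet> (M *v x))"
    have "compact K" unfolding K_def
      using closed_subspace[OF V] compact_sphere by (metis compact_Int_closed inf_commute)
    moreover have "K \<noteq> {}"
    proof -
      have "(1 / norm y) *\<^sub>R y \<in> K" unfolding K_def using y V
        by (simp add: subspace_mul)
      then show ?thesis by blast
    qed
    moreover have "continuous_on K f" unfolding f_def
      by (intro continuous_on_inner continuous_on_id linear_continuous_on matrix_vector_mul_bounded_linear)
    ultimately obtain v where vK: "v \<in> K" and vmax: "\<And>x. x \<in> K \<Longrightarrow> f x \<le> f v"
      using continuous_attains_sup by metis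
    have vV: "v \<in> V" and nv: "norm v = 1" using vK by (auto simp: K_def)
    define \<mu> where "\<mu> = f v"
    have bound: "f x \<le> \<mu> * (x \<bullet> x)" if "x \<in> V" for x
    proof (cases "x = 0")
      case True then show ?thesis by (simp add: f_def)
    next
      case False
      define x' where "x' = (1 / norm x) *\<^sub>R x"
      have "x' \<in> K" unfolding K_def x'_def using that False V by (simp add: subspace_mul)
      then have "f x' \<le> \<mu>" using vmax \<mu>_def by simp
      moreover have "f x' = f x / (norm x)^2"
        unfolding f_def x'_def by (simp add: power2_eq_square linear_scale[OF matrix_vector_mul_linear])
      moreover have "x \<bullet> x = (norm x)^2" by (simp add: power2_norm_eq_inner)
      moreover have "(norm x)^2 > 0" using False by simp
      ultimately show ?thesis by (simp add: divide_le_eq mult.commute)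
    qed
    define Bf where "Bf = (\<lambda>x. \<mu> *\<^sub>R x - M *v x)"
    have linB: "linear Bf" unfolding Bf_def
      by (rule linearI) (simp_all add: matrix_vector_right_distrib linear_scale[OF matrix_vector_mul_linear] algebra_simps)
    have symB: "Bf x \<bullet> y = x \<bullet> Bf y" for x y
      unfolding Bf_def using sym_dot[OF symM] by (simp add: inner_diff_left inner_diff_right)
    have psdB: "x \<bullet> Bf x \<ge> 0" if "x \<in> V" for x
      using bound[OF that] unfolding Bf_def f_def by (simp add: inner_diff_right)
    have zB: "v \<bullet> Bf v = 0"
      unfolding Bf_def \<mu>_def f_def using nv by (simp add: inner_diff_right power2_norm_eq_inner[symmetric])
    have BvV: "Bf v \<in> V" unfolding Bf_def using vV inv V by (simp add: subspace_diff subspace_mul)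
    have "Bf v \<bullet> Bf v = 0" by (rule psd_null[OF linB symB V psdB vV zB BvV])
    then have "Bf v = 0" by simp
    then have Mv: "M *v v = \<mu> *\<^sub>R v" unfolding Bf_def by simp
    have mu_eq: "\<mu> = v \<bullet> (M *v v)" unfolding \<mu>_def f_def ..
    define V' where "V' = {x \<in> V. x \<bullet> v = 0}"
    have V'sub: "subspace V'" using V unfolding V'_def subspace_def
      by (auto simp: inner_add_left)
    have V'inv: "\<forall>x\<in>V'. M *v x \<in> V'"
    proof
      fix x assume "x \<in> V'"
      then have "x \<in> V" "x \<bullet> v = 0" by (auto simp: V'_def)
      moreover have "(M *v x) \<bullet> v = x \<bullet> (M *v v)" by (rule sym_dot[OF symM])
      ultimately show "M *v x \<in> V'" unfolding V'_def using inv Mv by simp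
    qed
    have "V' \<subset> V"
    proof -
      have "v \<notin> V'" using nv by (simp add: V'_def power2_norm_eq_inner[symmetric])
      then show ?thesis using vV V'_def by blast
    qed
    then have "dim V' < dim V"
      using dim_psubset[of V' V] span_eq_iff[THEN iffD2, OF V] span_eq_iff[THEN iffD2, OF V'sub] by simp
    from less.hyps[OF this V'sub V'inv] obtain B' where
      B': "finite B'" "B' \<subseteq> V'" "pairwise orthogonal B'"
        "\<forall>b\<in>B'. norm b = 1 \<and> M *v b = (b \<bullet> (M *v b)) *\<^sub>R b" "span B' = V'" by blast
    show ?thesis
    proof (intro exI[of _ "insert v B'"] conjI)
      show "finite (insert v B')" using B' by simp
      show "insert v B' \<subseteq> V" using B' vV V'_def by blast
      show "pairwise orthogonal (insert v B')"
        using B'(2,3) unfolding pairwise_insert orthogonal_def V'_def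
        by (auto simp: inner_commute)
      show "\<forall>b\<in>insert v B'. norm b = 1 \<and> M *v b = (b \<bullet> (M *v b)) *\<^sub>R b"
        using B'(4) nv Mv mu_eq by auto
      show "span (insert v B') = V"
      proof
        show "span (insert v B') \<subseteq> V"
          using span_minimal[of "insert v B'" V] B' vV V V'_def by blast
        show "V \<subseteq> span (insert v B')"
        proof
          fix x assume xV: "x \<in> V"
          have "x - (x \<bullet> v) *\<^sub>R v \<in> V'"
            unfolding V'_def using xV vV V nv
            by (simp add: subspace_diff subspace_mul inner_diff_left power2_norm_eq_inner[symmetric])
          then have "x - (x \<bullet> v) *\<^sub>R v \<in> span (insert v B')"
            using B'(5) span_mono[of B' "insert v B'"] by blast
          moreover have "(x \<bullet> v) *\<^sub>R v \<in> span (insert v B')"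
            by (simp add: span_base span_mul)
          ultimately have "(x - (x \<bullet> v) *\<^sub>R v) + (x \<bullet> v) *\<^sub>R v \<in> span (insert v B')"
            by (rule span_add)
          then show "x \<in> span (insert v B')" by simp
        qed
      qed
    qed
  qed
qed

definition onb :: "(real^'n) set \<Rightarrow> bool" where
  "onb B \<longleftrightarrow> finite B \<and> pairwise orthogonal B \<and> (\<forall>b\<in>B. norm b = 1) \<and> span B = UNIV"

lemma spectral:
  fixes M :: "real^'n^'n"
  assumes "sym_mat M"
  shows "\<exists>B. onb B \<and> (\<forall>b\<in>B. M *v b = (b \<bullet> (M *v b)) *\<^sub>R b)"
  using spectral_sub[OF assms, of UNIV] unfolding onb_def by auto

lemma onb_expand:
  assumes "onb B"
  shows "(\<Sum>b\<in>B. (x \<bullet> b) *\<^sub>R b) = x"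
  using assms orthonormal_basis_expand[of B x] unfolding onb_def by auto

lemma onb_inner:
  assumes "onb B" and "b' \<in> B"
  shows "(\<Sum>b\<in>B. c b *\<^sub>R b) \<bullet> b' = c b'"
proof -
  have fin: "finite B" using assms by (simp add: onb_def)
  have "(\<Sum>b\<in>B. c b *\<^sub>R b) \<bullet> b' = (\<Sum>b\<in>B. c b * (b \<bullet> b'))"
    by (simp add: inner_sum_left)
  also have "\<dots> = c b' * (b' \<bullet> b') + (\<Sum>b\<in>B - {b'}. c b * (b \<bullet> b'))"
    using fin assms(2) by (simp add: sum.remove)
  also have "(\<Sum>b\<in>B - {b'}. c b * (b \<bullet> b')) = 0"
    using assms unfolding onb_def pairwise_def orthogonal_def by (intro sum.neutral) auto
  also have "b' \<bullet> b' = 1" using assms unfolding onb_def by (simp add: power2_norm_eq_inner[symmetric])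
  finally show ?thesis by simp
qed

lemma onb_nz:
  assumes "onb B" "x \<noteq> 0"
  shows "\<exists>b\<in>B. x \<bullet> b \<noteq> 0"
proof (rule ccontr)
  assume "\<not> ?thesis"
  then have "(\<Sum>b\<in>B. (x \<bullet> b) *\<^sub>R b) = 0" by simp
  then show False using onb_expand[OF assms(1)] assms(2) by simp
qed

lemma mat_apply_expand:
  fixes M :: "real^'n^'n"
  assumes "onb B" "\<forall>b\<in>B. M *v b = (b \<bullet> (M *v b)) *\<^sub>R b"
  shows "M *v x = (\<Sum>b\<in>B. ((x \<bullet> b) * (b \<bullet> (M *v b))) *\<^sub>R b)"
proof -
  have "M *v x = M *v (\<Sum>b\<in>B. (x \<bullet> b) *\<^sub>R b)" using onb_expand[OF assms(1)] by simp
  also have "\<dots> = (\<Sum>b\<in>B. (x \<bullet> b) *\<^sub>R (M *v b))"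
    by (simp add: linear_sum[OF matrix_vector_mul_linear] matrix_vector_mult_scaleR)
  also have "\<dots> = (\<Sum>b\<in>B. ((x \<bullet> b) * (b \<bullet> (M *v b))) *\<^sub>R b)"
  proof (rule sum.cong)
    fix b assume "b \<in> B"
    then have "M *v b = (b \<bullet> (M *v b)) *\<^sub>R b" using assms(2) by blast
    then show "(x \<bullet> b) *\<^sub>R (M *v b) = ((x \<bullet> b) * (b \<bullet> (M *v b))) *\<^sub>R b"
      by (metis scaleR_scaleR)
  qed simp
  finally show ?thesis .
qed

lemma quad_expand:
  fixes M :: "real^'n^'n"
  assumes "onb B" "\<forall>b\<in>B. M *v b = (b \<bullet> (M *v b)) *\<^sub>R b"
  shows "x \<bullet> (M *v x) = (\<Sum>b\<in>B. (b \<bullet> (M *v b)) * (x \<bullet> b)^2)"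
  using mat_apply_expand[OF assms, of x]
  by (simp add: inner_sum_right power2_eq_square algebra_simps inner_commute)

lemma norm_expand:
  assumes "onb B"
  shows "x \<bullet> x = (\<Sum>b\<in>B. (x \<bullet> b)^2)"
proof -
  have "x \<bullet> x = x \<bullet> (\<Sum>b\<in>B. (x \<bullet> b) *\<^sub>R b)" using onb_expand[OF assms] by simp
  then show ?thesis by (simp add: inner_sum_right power2_eq_square)
qed

lemma sqrt_exists:
  fixes E :: "real^'n^'n"
  assumes pd: "pos_def E"
  shows "\<exists>S. pos_def S \<and> S ** S = E"
proof -
  have symE: "sym_mat E" using pd by (simp add: pos_def_def)
  obtain B where B: "onb B" and eig: "\<forall>b\<in>B. E *v b = (b \<bullet> (E *v b)) *\<^sub>R b"
    using spectral[OF symE] by blast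
  define l where "l b = b \<bullet> (E *v b)" for b
  have lpos: "l b > 0" if "b \<in> B" for b
  proof -
    have "norm b = 1" using B that by (simp add: onb_def)
    then have "b \<noteq> 0" by auto
    then show ?thesis using pd by (simp add: pos_def_def l_def)
  qed
  have fin: "finite B" using B by (simp add: onb_def)
  define g where "g x = (\<Sum>b\<in>B. (sqrt (l b) * (x \<bullet> b)) *\<^sub>R b)" for x
  have lin: "linear g" unfolding g_def
    by (rule linearI) (simp_all add: inner_add_left algebra_simps scaleR_sum_right sum.distrib)
  define S where "S = matrix g"
  have Sx: "S *v x = g x" for x unfolding S_def using matrix_vector_mul(2)[OF lin] by metis
  have gi: "g x \<bullet> b = sqrt (l b) * (x \<bullet> b)" if "b \<in> B" for x b
    unfolding g_def by (rule onb_inner[OF B that])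
  have Ex: "E *v x = (\<Sum>b\<in>B. (l b * (x \<bullet> b)) *\<^sub>R b)" for x
    using mat_apply_expand[OF B eig, of x] by (simp add: l_def mult.commute)
  have "S ** S = E"
  proof (subst matrix_eq, intro allI)
    fix x
    have "(S ** S) *v x = g (g x)" by (simp add: Sx matrix_vector_mul_assoc[symmetric])
    also have "\<dots> = (\<Sum>b\<in>B. (sqrt (l b) * (sqrt (l b) * (x \<bullet> b))) *\<^sub>R b)"
      unfolding g_def[of "g x"] using gi by (intro sum.cong) auto
    also have "\<dots> = (\<Sum>b\<in>B. (l b * (x \<bullet> b)) *\<^sub>R b)"
      using lpos by (intro sum.cong) (auto simp: mult.assoc[symmetric] less_imp_le)
    finally show "(S ** S) *v x = E *v x" using Ex by simp
  qed
  moreover have "pos_def S"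
    unfolding pos_def_def
  proof (intro conjI allI impI)
    show "sym_mat S"
    proof (rule sym_matI)
      fix x y
      show "(S *v x) \<bullet> y = x \<bullet> (S *v y)"
        unfolding Sx g_def by (simp add: inner_sum_left inner_sum_right algebra_simps inner_commute)
    qed
    fix x :: "real^'n" assume "x \<noteq> 0"
    then obtain b0 where b0: "b0 \<in> B" "x \<bullet> b0 \<noteq> 0" using onb_nz[OF B] by blast
    have "x \<bullet> (S *v x) = (\<Sum>b\<in>B. sqrt (l b) * (x \<bullet> b)^2)"
      unfolding Sx g_def by (simp add: inner_sum_right power2_eq_square algebra_simps inner_commute)
    also have "\<dots> > 0"
    proof (rule sum_pos2[OF fin b0(1)])
      show "0 < sqrt (l b0) * (x \<bullet> b0)^2" using lpos[OF b0(1)] b0(2) by simp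
      show "\<And>b. b \<in> B \<Longrightarrow> 0 \<le> sqrt (l b) * (x \<bullet> b)^2" using lpos by (simp add: less_imp_le)
    qed
    finally show "x \<bullet> (S *v x) > 0" .
  qed
  ultimately show ?thesis by blast
qed

lemma sqrt_unique:
  fixes S T :: "real^'n^'n"
  assumes S: "pos_def S" and T: "pos_def T" and eq: "S ** S = T ** T"
  shows "S = T"
proof -
  have sS: "sym_mat S" and sT: "sym_mat T" using S T by (auto simp: pos_def_def)
  define D where "D = S - T"
  have Dx: "D *v x = S *v x - T *v x" for x unfolding D_def by (simp add: matrix_vector_mult_diff_rdistrib)
  have sD: "sym_mat D"
    by (rule sym_matI) (simp add: Dx inner_diff_left inner_diff_right sym_dot[OF sS] sym_dot[OF sT])
  obtain B where B: "onb B" and eig: "\<forall>b\<in>B. D *v b = (b \<bullet> (D *v b)) *\<^sub>R b"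
    using spectral[OF sD] by blast
  have d0: "b \<bullet> (D *v b) = 0" if bB: "b \<in> B" for b
  proof -
    define d where "d = b \<bullet> (D *v b)"
    have Db: "D *v b = d *\<^sub>R b" using eig bB d_def by auto
    have "b \<noteq> 0" using B bB by (auto simp: onb_def)
    then have pS: "b \<bullet> (S *v b) > 0" and pT: "b \<bullet> (T *v b) > 0" using S T by (auto simp: pos_def_def)
    have SS: "S *v (S *v b) = T *v (T *v b)" using eq by (simp add: matrix_vector_mul_assoc)
    have "S *v (D *v b) + D *v (T *v b) = 0"
      using SS by (simp add: Dx matrix_vector_mult_diff_distrib)
    then have "b \<bullet> (S *v (D *v b)) + b \<bullet> (D *v (T *v b)) = 0"
      by (metis inner_add_right inner_zero_right)
    moreover have "b \<bullet> (S *v (D *v b)) = d * (b \<bullet> (S *v b))"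
      by (simp add: Db matrix_vector_mult_scaleR)
    moreover have "b \<bullet> (D *v (T *v b)) = d * (b \<bullet> (T *v b))"
      using sym_dot[OF sD, of b "T *v b"] by (simp add: Db)
    ultimately have "d * (b \<bullet> (S *v b) + b \<bullet> (T *v b)) = 0" by (simp add: algebra_simps)
    then show ?thesis using pS pT d_def by simp
  qed
  have "D *v x = 0" for x
    using mat_apply_expand[OF B eig, of x] d0 by simp
  then have "D = 0" by (simp add: matrix_eq)
  then show ?thesis unfolding D_def by simp
qed

lemma psd_sqrt_props:
  fixes E :: "real^'n^'n"
  assumes "pos_def E"
  shows "pos_def (psd_sqrt E) \<and> psd_sqrt E ** psd_sqrt E = E"
proof -
  have "\<exists>!S. pos_def S \<and> S ** S = E"
    using sqrt_exists[OF assms] sqrt_unique by metis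
  then show ?thesis unfolding psd_sqrt_def by (rule theI')
qed

lemma lambda_max_bound:
  fixes M :: "real^'n^'n"
  assumes symM: "sym_mat M"
  shows "x \<bullet> (M *v x) \<le> lambda_max M * (x \<bullet> x)"
proof -
  obtain B where B: "onb B" and eig: "\<forall>b\<in>B. M *v b = (b \<bullet> (M *v b)) *\<^sub>R b"
    using spectral[OF symM] by blast
  define l where "l b = b \<bullet> (M *v b)" for b
  have fin: "finite B" using B by (simp add: onb_def)
  have sub: "{l. eigenvalue M l} \<subseteq> l ` B"
  proof
    fix lam assume "lam \<in> {l. eigenvalue M l}"
    then obtain w where w: "w \<noteq> 0" "M *v w = lam *\<^sub>R w" by (auto simp: eigenvalue_def)
    obtain b where b: "b \<in> B" "w \<bullet> b \<noteq> 0" using onb_nz[OF B w(1)] by blast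
    have "(M *v w) \<bullet> b = w \<bullet> (M *v b)" by (rule sym_dot[OF symM])
    also have "\<dots> = l b * (w \<bullet> b)"
    proof -
      have "M *v b = l b *\<^sub>R b" using eig b(1) unfolding l_def by blast
      then show ?thesis by simp
    qed
    finally have "lam * (w \<bullet> b) = l b * (w \<bullet> b)" using w(2) by simp
    then have "lam = l b" using b(2) by simp
    then show "lam \<in> l ` B" using b(1) by blast
  qed
  have eigB: "eigenvalue M (l b)" if "b \<in> B" for b
  proof -
    have "b \<noteq> 0" using B that by (auto simp: onb_def)
    then show ?thesis unfolding eigenvalue_def l_def using eig that by blast
  qed
  have finE: "finite {l. eigenvalue M l}" using finite_subset[OF sub] fin by blast
  have ge: "l b \<le> lambda_max M" if "b \<in> B" for b
    unfolding lambda_max_def by (rule Max_ge[OF finE]) (simp add: eigB[OF that])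
  have "x \<bullet> (M *v x) = (\<Sum>b\<in>B. l b * (x \<bullet> b)^2)"
    unfolding l_def by (rule quad_expand[OF B eig])
  also have "\<dots> \<le> (\<Sum>b\<in>B. lambda_max M * (x \<bullet> b)^2)"
    using ge by (intro sum_mono mult_right_mono) auto
  also have "\<dots> = lambda_max M * (x \<bullet> x)"
    using norm_expand[OF B] by (simp add: sum_distrib_left)
  finally show ?thesis .
qed

lemma pd_inv:
  fixes P :: "real^'n^'n"
  assumes "pos_def P"
  shows "P ** matrix_inv P = mat 1 \<and> matrix_inv P ** P = mat 1"
proof -
  have "\<forall>x. P *v x = 0 \<longrightarrow> x = 0"
  proof (intro allI impI)
    fix x assume "P *v x = 0"
    then show "x = 0" using assms unfolding pos_def_def by force
  qed
  then have "invertible P" using matrix_left_invertible_ker invertible_left_inverse by blast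
  then show ?thesis unfolding invertible_def matrix_inv_def by (rule someI_ex)
qed

lemma outer_apply: "outer u v *v x = (v \<bullet> x) *\<^sub>R u"
  by (simp add: vec_eq_iff outer_def matrix_vector_mult_def inner_vec_def sum_distrib_left sum_distrib_right mult.assoc mult.commute mult.left_commute)

lemma cs_E:
  fixes E :: "real^'n^'n"
  assumes pd: "pos_def E"
  shows "(c \<bullet> x)^2 \<le> (c \<bullet> (matrix_inv E *v c)) * (x \<bullet> (E *v x))"
proof -
  define S where "S = psd_sqrt E"
  have S: "pos_def S" "S ** S = E" using psd_sqrt_props[OF pd] S_def by auto
  have sS: "sym_mat S" using S by (simp add: pos_def_def)
  define u where "u = matrix_inv E *v c"
  have Eu: "E *v u = c" unfolding u_def using pd_inv[OF pd] by (simp add: matrix_vector_mul_assoc)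
  have q: "y \<bullet> (E *v z) = (S *v y) \<bullet> (S *v z)" for y z
    using sym_dot[OF sS] S(2) by (metis matrix_vector_mul_assoc)
  have "c \<bullet> x = u \<bullet> (E *v x)"
    using Eu sym_dot[OF conjunct1[OF pos_def_def[THEN iffD1, OF pd]]] by metis
  also have "\<dots> = (S *v u) \<bullet> (S *v x)" by (rule q)
  finally have "(c \<bullet> x)^2 = ((S *v u) \<bullet> (S *v x))^2" by simp
  also have "\<dots> \<le> ((S *v u) \<bullet> (S *v u)) * ((S *v x) \<bullet> (S *v x))" by (rule Cauchy_Schwarz_ineq)
  also have "\<dots> = (u \<bullet> (E *v u)) * (x \<bullet> (E *v x))" using q by simp
  also have "u \<bullet> (E *v u) = c \<bullet> (matrix_inv E *v c)" using Eu u_def by (simp add: inner_commute)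
  finally show ?thesis .
qed

lemma final_arith:
  fixes a b c K \<gamma> \<alpha> :: real
  assumes "a^2 \<le> K * \<alpha>^2" "2*a*b + c^2 \<le> \<gamma> * \<alpha>^2"
  shows "(a*b + c^2)^2 \<le> \<alpha>^2 * (K * b^2 + \<gamma> * c^2)"
proof -
  have e: "(a*b + c^2)^2 = a^2 * b^2 + c^2 * (2*a*b + c^2)" by (simp add: power2_eq_square algebra_simps)
  have "a^2 * b^2 \<le> K * \<alpha>^2 * b^2" using assms(1) by (simp add: mult_right_mono)
  moreover have "c^2 * (2*a*b + c^2) \<le> c^2 * (\<gamma> * \<alpha>^2)" using assms(2) by (simp add: mult_left_mono)
  ultimately show ?thesis unfolding e by (simp add: algebra_simps)
qed

definition bcoef :: "real^('n::{finite,linorder})^('n::{finite,linorder}) \<Rightarrow> 'n \<times> 'n \<Rightarrow> real" where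
  "bcoef Q = (\<lambda>(i,j). if i = j then Q$i$i else Q$i$j + Q$j$i)"

lemma quad_monomial:
  fixes Q :: "real^('n::{finite,linorder})^('n::{finite,linorder})"
  shows "x \<bullet> (Q *v x) = (\<Sum>p\<in>mono_idx. bcoef Q p * zmap x p)"
proof -
  define h where "h = (\<lambda>(i::'n,j). Q$i$j * x$i * x$j)"
  have 1: "x \<bullet> (Q *v x) = (\<Sum>p\<in>UNIV. h p)"
    by (simp add: inner_vec_def matrix_vector_mult_def sum_distrib_left h_def
        sum.cartesian_product[symmetric] UNIV_Times_UNIV[symmetric] algebra_simps del: UNIV_Times_UNIV)
  have 2: "(\<Sum>p\<in>UNIV. h p) = (\<Sum>p\<in>UNIV. if fst p \<le> snd p then h p else 0)
       + (\<Sum>p\<in>UNIV. if snd p < fst p then h p else 0)"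
    by (subst sum.distrib[symmetric]) (rule sum.cong, auto)
  have 3: "(\<Sum>p\<in>UNIV. if snd p < fst p then h p else 0)
      = (\<Sum>p\<in>UNIV. if fst p < snd p then h (prod.swap p) else 0)"
    by (rule sum.reindex_bij_witness[of _ prod.swap prod.swap]) auto
  have 4: "(\<Sum>p\<in>mono_idx. bcoef Q p * zmap x p) =
      (\<Sum>p\<in>UNIV. if p \<in> mono_idx then bcoef Q p * zmap x p else 0)"
    using sum.inter_restrict[of UNIV "\<lambda>p. bcoef Q p * zmap x p" mono_idx] by simp
  have 5: "(\<Sum>p\<in>UNIV. if p \<in> mono_idx then bcoef Q p * zmap x p else 0) =
      (\<Sum>p\<in>UNIV. (if fst p \<le> snd p then h p else 0) + (if fst p < snd p then h (prod.swap p) else 0))"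
    by (rule sum.cong) (auto simp: mono_idx_def bcoef_def zmap_def h_def algebra_simps)
  have 6: "(\<Sum>p\<in>UNIV. (if fst p \<le> snd p then h p else 0) + (if fst p < snd p then h (prod.swap p) else 0))
     = (\<Sum>p\<in>UNIV. if fst p \<le> snd p then h p else 0) + (\<Sum>p\<in>UNIV. if fst p < snd p then h (prod.swap p) else 0)"
    by (rule sum.distrib)
  show ?thesis using 1 2 3 4 5 6 by linarith
qed

lemma dsum:
  fixes w bb :: "'a \<Rightarrow> real"
  shows "(\<Sum>p\<in>A. \<Sum>q\<in>A. w p * (- (bb p * bb q)) * w q) = - ((\<Sum>p\<in>A. bb p * w p)^2)"
proof -
  define f where "f p = bb p * w p" for p
  have "(\<Sum>p\<in>A. \<Sum>q\<in>A. w p * (- (bb p * bb q)) * w q) = (\<Sum>p\<in>A. \<Sum>q\<in>A. - (f p * f q))"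
    unfolding f_def by (intro sum.cong refl) (simp add: mult.commute mult.left_commute)
  also have "\<dots> = - (sum f A * sum f A)"
    by (simp add: sum_negf sum_product)
  finally show ?thesis unfolding f_def by (simp add: power2_eq_square)
qed

theorem theorem3:
  fixes E :: "real^('n::{finite,linorder})^('n::{finite,linorder})"
    and \<alpha> :: real
    and c1 c2 c3 :: "real^('n::{finite,linorder})"
    and Q :: "real^('n::{finite,linorder})^('n::{finite,linorder})"
    and \<phi> :: "real^('n::{finite,linorder}) \<Rightarrow> real"
  assumes E_pd: "pos_def E"
    and \<alpha>_pos: "\<alpha> > 0"
    and nz: "c1 \<noteq> 0" "c2 \<noteq> 0" "c3 \<noteq> 0"
    and distinct: "c1 \<noteq> c2" "c1 \<noteq> c3" "c2 \<noteq> c3"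
    and indep: "independent {c1, c2, c3}"
    and orth: "c3 \<bullet> c1 = 0" "c3 \<bullet> c2 = 0"
    and Q_def: "Q = (1/2) *\<^sub>R (outer c1 c2 + outer c2 c1) + outer c3 c3"
    and \<phi>_def: "\<phi> = (\<lambda>x. x \<bullet> (Q *v x))"
  shows "\<exists>b :: 'n \<times> 'n \<Rightarrow> real.
           (\<forall>x. \<phi> x = (\<Sum>p\<in>mono_idx. b p * zmap x p)) \<and>
           (\<forall>W \<gamma>. (W = (c1 \<bullet> (matrix_inv E *v c1)) *\<^sub>R outer c2 c2 \<or>
                    W = (c2 \<bullet> (matrix_inv E *v c2)) *\<^sub>R outer c1 c1) \<longrightarrow>
                   \<gamma> = lambda_max (inv_sqrt E ** (2 *\<^sub>R Q - outer c3 c3) ** inv_sqrt E) \<longrightarrow>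
              (\<forall>x w. x \<in> ellipsoid E \<alpha> \<longrightarrow> w = zmap x \<longrightarrow>
                 x \<bullet> ((\<alpha>^2 *\<^sub>R (W + \<gamma> *\<^sub>R outer c3 c3)) *v x)
                 + (\<Sum>p\<in>mono_idx. \<Sum>q\<in>mono_idx. w p * (- (b p * b q)) * w q) \<ge> 0))"
proof -
  define b where "b = bcoef Q"
  have Qx: "Q *v y = (1/2) *\<^sub>R ((c2 \<bullet> y) *\<^sub>R c1 + (c1 \<bullet> y) *\<^sub>R c2) + (c3 \<bullet> y) *\<^sub>R c3" for y
    unfolding Q_def by (simp add: matrix_vector_mult_add_rdistrib scaleR_matrix_vector_assoc[symmetric] outer_apply)
  have phix: "\<phi> y = (c1 \<bullet> y) * (c2 \<bullet> y) + (c3 \<bullet> y)^2" for y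
    unfolding \<phi>_def Qx by (simp add: inner_add_right power2_eq_square algebra_simps inner_commute)
  have phi: "\<phi> y = (\<Sum>p\<in>mono_idx. b p * zmap y p)" for y
    using quad_monomial[of y Q] \<phi>_def b_def by simp
  define A where "A = 2 *\<^sub>R Q - outer c3 c3"
  have Ax: "A *v y = (c2 \<bullet> y) *\<^sub>R c1 + (c1 \<bullet> y) *\<^sub>R c2 + (c3 \<bullet> y) *\<^sub>R c3" for y
    unfolding A_def by (simp add: matrix_vector_mult_diff_rdistrib scaleR_matrix_vector_assoc[symmetric] Qx outer_apply scaleR_add_right) (simp add: vec_eq_iff)
  have xAx: "y \<bullet> (A *v y) = 2 * ((c1 \<bullet> y) * (c2 \<bullet> y)) + (c3 \<bullet> y)^2" for y
    unfolding Ax by (simp add: inner_add_right power2_eq_square algebra_simps inner_commute)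
  have sA: "sym_mat A"
    by (rule sym_matI) (simp add: Ax inner_add_left inner_add_right algebra_simps inner_commute)
  define S where "S = psd_sqrt E"
  have S: "pos_def S" "S ** S = E" using psd_sqrt_props[OF E_pd] S_def by auto
  have sS: "sym_mat S" using S by (simp add: pos_def_def)
  define Si where "Si = inv_sqrt E"
  have Si: "S ** Si = mat 1" "Si ** S = mat 1" using pd_inv[OF S(1)] unfolding Si_def S_def inv_sqrt_def by auto
  have SSi: "S *v (Si *v y) = y" "Si *v (S *v y) = y" for y
    using Si by (simp_all add: matrix_vector_mul_assoc)
  have sSi: "sym_mat Si"
  proof (rule sym_matI)
    fix x y
    have "(Si *v x) \<bullet> y = (Si *v x) \<bullet> (S *v (Si *v y))" using SSi by simp
    also have "\<dots> = (S *v (Si *v x)) \<bullet> (Si *v y)" using sym_dot[OF sS] by simp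
    also have "\<dots> = x \<bullet> (Si *v y)" using SSi by simp
    finally show "(Si *v x) \<bullet> y = x \<bullet> (Si *v y)" .
  qed
  define M where "M = Si ** A ** Si"
  have Mx: "M *v y = Si *v (A *v (Si *v y))" for y
    unfolding M_def by (simp add: matrix_vector_mul_assoc matrix_mul_assoc)
  have sM: "sym_mat M"
    by (rule sym_matI) (simp add: Mx sym_dot[OF sSi] sym_dot[OF sA])
  define \<gamma>0 where "\<gamma>0 = lambda_max M"
  have key: "y \<bullet> (A *v y) \<le> \<gamma>0 * (y \<bullet> (E *v y))" for y
  proof -
    have "(S *v y) \<bullet> (M *v (S *v y)) \<le> \<gamma>0 * ((S *v y) \<bullet> (S *v y))"
      unfolding \<gamma>0_def by (rule lambda_max_bound[OF sM])
    moreover have "(S *v y) \<bullet> (M *v (S *v y)) = y \<bullet> (A *v y)"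
      unfolding Mx SSi using sym_dot[OF sS, of y "Si *v (A *v y)"] SSi by (simp add: inner_commute)
    moreover have "(S *v y) \<bullet> (S *v y) = y \<bullet> (E *v y)"
      using sym_dot[OF sS, of y "S *v y"] S(2) by (simp add: matrix_vector_mul_assoc)
    ultimately show ?thesis by simp
  qed
  have g0: "\<gamma>0 \<ge> 0"
  proof (rule ccontr)
    assume "\<not> \<gamma>0 \<ge> 0"
    moreover have "c3 \<bullet> (E *v c3) > 0" using E_pd nz(3) by (simp add: pos_def_def)
    ultimately have "\<gamma>0 * (c3 \<bullet> (E *v c3)) < 0" by (simp add: mult_neg_pos)
    moreover have "c3 \<bullet> (A *v c3) > 0" using xAx[of c3] orth nz(3) by (simp add: inner_commute)
    ultimately show False using key[of c3] by simp
  qed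
  have Kpos: "c \<bullet> (matrix_inv E *v c) \<ge> 0" if "c \<noteq> 0" for c
  proof -
    have "(c \<bullet> c)^2 \<le> (c \<bullet> (matrix_inv E *v c)) * (c \<bullet> (E *v c))" by (rule cs_E[OF E_pd])
    moreover have "c \<bullet> (E *v c) > 0" using E_pd that by (simp add: pos_def_def)
    moreover have "(c \<bullet> c)^2 > 0" using that by simp
    ultimately show ?thesis by (metis less_le_trans not_le zero_less_mult_iff less_imp_le)
  qed
  show ?thesis
  proof (rule exI[of _ b], intro conjI allI impI)
    show "\<phi> x = (\<Sum>p\<in>mono_idx. b p * zmap x p)" for x by (rule phi)
  next
    fix W \<gamma> x w
    assume HW: "W = (c1 \<bullet> (matrix_inv E *v c1)) *\<^sub>R outer c2 c2 \<or>
                    W = (c2 \<bullet> (matrix_inv E *v c2)) *\<^sub>R outer c1 c1"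
      and Hg: "\<gamma> = lambda_max (inv_sqrt E ** (2 *\<^sub>R Q - outer c3 c3) ** inv_sqrt E)"
      and Hx: "x \<in> ellipsoid E \<alpha>" and Hw: "w = zmap x"
    have gg: "\<gamma> = \<gamma>0" using Hg unfolding \<gamma>0_def M_def Si_def A_def by simp
    have xE: "x \<bullet> (E *v x) \<le> \<alpha>^2" using Hx by (simp add: ellipsoid_def)
    define a1 where "a1 = c1 \<bullet> x"
    define a2 where "a2 = c2 \<bullet> x"
    define a3 where "a3 = c3 \<bullet> x"
    have phx: "\<phi> x = a1 * a2 + a3^2" unfolding a1_def a2_def a3_def by (rule phix)
    have dA: "2 * a1 * a2 + a3^2 \<le> \<gamma> * \<alpha>^2"
    proof -
      have "x \<bullet> (A *v x) \<le> \<gamma>0 * (x \<bullet> (E *v x))" by (rule key)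
      also have "\<dots> \<le> \<gamma>0 * \<alpha>^2" using g0 xE by (simp add: mult_left_mono)
      finally show ?thesis using xAx[of x] gg unfolding a1_def a2_def a3_def by simp
    qed
    have csb: "(c \<bullet> x)^2 \<le> (c \<bullet> (matrix_inv E *v c)) * \<alpha>^2" if "c \<noteq> 0" for c
    proof -
      have "(c \<bullet> x)^2 \<le> (c \<bullet> (matrix_inv E *v c)) * (x \<bullet> (E *v x))" by (rule cs_E[OF E_pd])
      also have "\<dots> \<le> (c \<bullet> (matrix_inv E *v c)) * \<alpha>^2" using Kpos[OF that] xE by (simp add: mult_left_mono)
      finally show ?thesis .
    qed
    have sumw: "(\<Sum>p\<in>mono_idx. \<Sum>q\<in>mono_idx. w p * (- (b p * b q)) * w q) = - ((\<phi> x)^2)"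
      using dsum[of w b mono_idx] phi[of x] Hw by simp
    have lhs: "x \<bullet> ((\<alpha>^2 *\<^sub>R (W + \<gamma> *\<^sub>R outer c3 c3)) *v x) = \<alpha>^2 * (x \<bullet> (W *v x) + \<gamma> * a3^2)"
      by (simp add: scaleR_matrix_vector_assoc[symmetric] matrix_vector_mult_add_rdistrib outer_apply
          inner_add_right a3_def power2_eq_square algebra_simps inner_commute)
    have main: "(\<phi> x)^2 \<le> \<alpha>^2 * (x \<bullet> (W *v x) + \<gamma> * a3^2)"
      using HW
    proof
      assume W1: "W = (c1 \<bullet> (matrix_inv E *v c1)) *\<^sub>R outer c2 c2"
      have "x \<bullet> (W *v x) = (c1 \<bullet> (matrix_inv E *v c1)) * a2^2"
        unfolding W1 by (simp add: scaleR_matrix_vector_assoc[symmetric] outer_apply a2_def power2_eq_square inner_commute)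
      moreover have "(a1 * a2 + a3^2)^2 \<le> \<alpha>^2 * ((c1 \<bullet> (matrix_inv E *v c1)) * a2^2 + \<gamma> * a3^2)"
        by (rule final_arith) (use csb[OF nz(1)] dA a1_def in auto)
      ultimately show ?thesis using phx by simp
    next
      assume W2: "W = (c2 \<bullet> (matrix_inv E *v c2)) *\<^sub>R outer c1 c1"
      have "x \<bullet> (W *v x) = (c2 \<bullet> (matrix_inv E *v c2)) * a1^2"
        unfolding W2 by (simp add: scaleR_matrix_vector_assoc[symmetric] outer_apply a1_def power2_eq_square inner_commute)
      moreover have "(a2 * a1 + a3^2)^2 \<le> \<alpha>^2 * ((c2 \<bullet> (matrix_inv E *v c2)) * a1^2 + \<gamma> * a3^2)"
        by (rule final_arith) (use csb[OF nz(2)] dA a2_def in \<open>auto simp: algebra_simps\<close>)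
      ultimately show ?thesis using phx by (simp add: mult.commute)
    qed
    show "x \<bullet> ((\<alpha>^2 *\<^sub>R (W + \<gamma> *\<^sub>R outer c3 c3)) *v x)
                 + (\<Sum>p\<in>mono_idx. \<Sum>q\<in>mono_idx. w p * (- (b p * b q)) * w q) \<ge> 0"
      using main lhs sumw by simp
  qed
qed

end
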